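(* Let $G=(N,A)$ be an $s$-$t$ directed graph and let $u,v\in N$. Suppose that $u$ $s$-dominates $v$ and that $v$ does not $t$-dominate $u$. Then every node $w$ that is $t$-dominated by $v$ is strictly $s$-dominated by $u$.
   Context: An $s$-$t$ directed graph is a directed graph (not necessarily acyclic) with a unique source $s$ and a unique sink $t$ such that every node is reachable from $s$ and every node reaches $t$. A node $a$ $s$-dominates $b$ if every $s$-$b$ path contains $a$ (every node $s$-dominates itself); $a$ strictly $s$-dominates $b$ if moreover $a\neq b$. A node $a$ $t$-dominates $b$ (equivalently, $b$ is $t$-dominated by $a$) if every $b$-$t$ path contains $a$. *)

theory Defs
  imports Main
begin

text \<open>A path from x to y is a nonempty list of nodes starting at x, ending at y,
whose consecutive nodes are joined by arcs (repeated nodes allowed; this does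
not affect domination).\<close>

definition is_path :: "('a \<times> 'a) set \<Rightarrow> 'a list \<Rightarrow> 'a \<Rightarrow> 'a \<Rightarrow> bool" where
  "is_path A p x y \<longleftrightarrow> p \<noteq> [] \<and> hd p = x \<and> last p = y \<and>
     (\<forall>i. Suc i < length p \<longrightarrow> (p ! i, p ! Suc i) \<in> A)"

definition reaches :: "('a \<times> 'a) set \<Rightarrow> 'a \<Rightarrow> 'a \<Rightarrow> bool" where
  "reaches A x y \<longleftrightarrow> (\<exists>p. is_path A p x y)"

definition is_source :: "'a set \<Rightarrow> ('a \<times> 'a) set \<Rightarrow> 'a \<Rightarrow> bool" where
  "is_source N A x \<longleftrightarrow> x \<in> N \<and> (\<forall>y. (y, x) \<notin> A)"

definition is_sink :: "'a set \<Rightarrow> ('a \<times> 'a) set \<Rightarrow> 'a \<Rightarrow> bool" where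
  "is_sink N A x \<longleftrightarrow> x \<in> N \<and> (\<forall>y. (x, y) \<notin> A)"

definition st_graph :: "'a set \<Rightarrow> ('a \<times> 'a) set \<Rightarrow> 'a \<Rightarrow> 'a \<Rightarrow> bool" where
  "st_graph N A s t \<longleftrightarrow> finite N \<and> A \<subseteq> N \<times> N \<and>
     {x. is_source N A x} = {s} \<and> {x. is_sink N A x} = {t} \<and>
     (\<forall>x\<in>N. reaches A s x \<and> reaches A x t)"

definition s_dominates :: "('a \<times> 'a) set \<Rightarrow> 'a \<Rightarrow> 'a \<Rightarrow> 'a \<Rightarrow> bool" where
  "s_dominates A s a b \<longleftrightarrow> (\<forall>p. is_path A p s b \<longrightarrow> a \<in> set p)"

definition strictly_s_dominates :: "('a \<times> 'a) set \<Rightarrow> 'a \<Rightarrow> 'a \<Rightarrow> 'a \<Rightarrow> bool" where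
  "strictly_s_dominates A s a b \<longleftrightarrow> s_dominates A s a b \<and> a \<noteq> b"

definition t_dominates :: "('a \<times> 'a) set \<Rightarrow> 'a \<Rightarrow> 'a \<Rightarrow> 'a \<Rightarrow> bool" where
  "t_dominates A t a b \<longleftrightarrow> (\<forall>p. is_path A p b t \<longrightarrow> a \<in> set p)"

end

theory Submission
  imports Defs
begin

lemma path_single: "is_path A [a] x y \<longleftrightarrow> a = x \<and> a = y"
  by (auto simp: is_path_def)

lemma path_cons2: "is_path A (a # b # l) x y \<longleftrightarrow> a = x \<and> (a, b) \<in> A \<and> is_path A (b # l) b y"
proof
  assume h: "is_path A (a # b # l) x y"
  then have "\<forall>i. Suc i < length (a#b#l) \<longrightarrow> ((a#b#l) ! i, (a#b#l) ! Suc i) \<in> A"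
    unfolding is_path_def by blast
  then have "(a,b) \<in> A" "\<forall>i. Suc i < length (b#l) \<longrightarrow> ((b#l) ! i, (b#l) ! Suc i) \<in> A"
  proof -
    assume H: "\<forall>i. Suc i < length (a#b#l) \<longrightarrow> ((a#b#l) ! i, (a#b#l) ! Suc i) \<in> A"
    show "(a,b) \<in> A" using H[rule_format, of 0] by simp
    show "\<forall>i. Suc i < length (b#l) \<longrightarrow> ((b#l) ! i, (b#l) ! Suc i) \<in> A"
    proof (intro allI impI)
      fix i assume "Suc i < length (b#l)"
      then show "((b#l) ! i, (b#l) ! Suc i) \<in> A" using H[rule_format, of "Suc i"] by simp
    qed
  qed
  moreover have "a = x" "last (b#l) = y" using h by (auto simp: is_path_def)
  ultimately show "a = x \<and> (a, b) \<in> A \<and> is_path A (b # l) b y" by (simp add: is_path_def)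
next
  assume h: "a = x \<and> (a, b) \<in> A \<and> is_path A (b # l) b y"
  show "is_path A (a # b # l) x y"
    unfolding is_path_def
  proof (intro conjI allI impI)
    fix i assume "Suc i < length (a # b # l)"
    then show "((a # b # l) ! i, (a # b # l) ! Suc i) \<in> A" using h
      by (cases i) (auto simp: is_path_def)
  qed (use h in \<open>auto simp: is_path_def\<close>)
qed

lemma path_hd: "is_path A p x y \<Longrightarrow> \<exists>l. p = x # l"
  by (cases p) (auto simp: is_path_def)

lemma path_app: "is_path A p x y \<Longrightarrow> is_path A q y z \<Longrightarrow> is_path A (p @ tl q) x z"
proof (induction p arbitrary: x)
  case Nil then show ?case by (simp add: is_path_def)
next
  case (Cons a p)
  show ?case
  proof (cases p)
    case Nil
    then have "a = x" "a = y" using Cons.prems by (auto simp: path_single)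
    moreover obtain l where "q = y # l" using path_hd[OF Cons.prems(2)] by blast
    ultimately show ?thesis using Cons.prems Nil by simp
  next
    case (Cons b l)
    then have "a = x" "(a,b) \<in> A" "is_path A p b y" using Cons.prems(1) by (auto simp: path_cons2)
    then have "is_path A (p @ tl q) b z" using Cons.IH Cons.prems(2) by blast
    then show ?thesis using \<open>a = x\<close> \<open>(a,b) \<in> A\<close> Cons by (simp add: path_cons2)
  qed
qed

lemma path_prefix: "is_path A (xs @ v # ys) x z \<Longrightarrow> is_path A (xs @ [v]) x v"
proof (induction xs arbitrary: x)
  case Nil then show ?case by (auto simp: is_path_def)
next
  case (Cons a xs)
  show ?case
  proof (cases xs)
    case Nil
    then show ?thesis using Cons.prems by (auto simp: path_cons2 path_single)
  next
    case (Cons b l)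
    then show ?thesis using Cons.prems Cons.IH[of b] by (auto simp: path_cons2)
  qed
qed

theorem lemma8:
  assumes "st_graph N A s t"
    and "u \<in> N" and "v \<in> N"
    and "s_dominates A s u v"
    and "\<not> t_dominates A t v u"
  shows "\<forall>w\<in>N. t_dominates A t v w \<longrightarrow> strictly_s_dominates A s u w"
proof (intro ballI impI)
  fix w assume wN: "w \<in> N" and tw: "t_dominates A t v w"
  obtain q where q: "is_path A q u t" "v \<notin> set q" using assms(5) unfolding t_dominates_def by blast
  have uv: "u \<noteq> v" using q path_hd[OF q(1)] by auto
  have uw: "u \<noteq> w" using tw assms(5) by auto
  obtain r where r: "is_path A r w t" using assms(1) wN unfolding st_graph_def reaches_def by blast
  have "v \<in> set r" using tw r unfolding t_dominates_def by blast
  then obtain r1 r2 where rr: "r = r1 @ v # r2" "v \<notin> set r1" by (meson split_list_first)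
  have pw: "is_path A (r1 @ [v]) w v" using path_prefix r rr by metis
  have "s_dominates A s u w" unfolding s_dominates_def
  proof (intro allI impI)
    fix p assume p: "is_path A p s w"
    show "u \<in> set p"
    proof (rule ccontr)
      assume up: "u \<notin> set p"
      have "is_path A (p @ tl (r1 @ [v])) s v" using path_app[OF p pw] .
      then have "u \<in> set (p @ tl (r1 @ [v]))" using assms(4) unfolding s_dominates_def by blast
      then have "u \<in> set (tl (r1 @ [v]))" using up by simp
      then have "u \<in> set r1" using uv
        by (cases r1) auto
      then obtain a b where ab: "r1 = a @ u # b" by (meson split_list)
      have "is_path A (a @ [u]) w u" using pw ab path_prefix by (metis append.assoc append_Cons)
      then have "is_path A ((a @ [u]) @ tl q) w t" using path_app[OF _ q(1)] by blast
      then have "v \<in> set ((a @ [u]) @ tl q)" using tw unfolding t_dominates_def by blast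
      moreover have "v \<notin> set (tl q)" using q(2) by (cases q) auto
      ultimately show False using rr(2) ab uv by auto
    qed
  qed
  then show "strictly_s_dominates A s u w" using uw by (simp add: strictly_s_dominates_def)
qed

end
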